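(* Let $k>4$ and $v\ge2$ be integers. If an OA$(3,k+1,v)$ exists, then a simple COA$_\lambda(2,2k+1,v)$ exists for every positive integer $\lambda\le v$.
   Context: An OA$_\lambda(t,k,v)$ is a $\lambda v^t\times k$ array over a $v$-set $V$ such that every $t$ columns contain every $t$-tuple exactly $\lambda$ times; OA$(t,k,v)$ means $\lambda=1$. A COA$_\lambda(t,k,v)$ is a $\lambda v^t\times k$ array over $V$ in which every set of $t$ consecutive columns contains every $t$-tuple exactly $\lambda$ times. It is simple if for any two distinct sets of $t$ consecutive columns sharing exactly $i$ columns ($0\le i\le t-1$), the subarray on the $2t-i$ columns of their union contains each $(2t-i)$-tuple at most once. *)

theory Defs
  imports Main
begin

text \<open>An array is a list of rows; each row is a list of entries (columns indexed from 0).\<close>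

definition proj :: "'a list \<Rightarrow> nat list \<Rightarrow> 'a list" where
  "proj r cols = map (\<lambda>c. r ! c) cols"

definition occ :: "'a list list \<Rightarrow> nat list \<Rightarrow> 'a list \<Rightarrow> nat" where
  "occ A cols x = length (filter (\<lambda>r. proj r cols = x) A)"

definition is_array :: "nat \<Rightarrow> nat \<Rightarrow> 'a set \<Rightarrow> 'a list list \<Rightarrow> bool" where
  "is_array N k V A \<longleftrightarrow> length A = N \<and> (\<forall>r\<in>set A. length r = k \<and> set r \<subseteq> V)"

definition is_OA :: "nat \<Rightarrow> nat \<Rightarrow> nat \<Rightarrow> 'a set \<Rightarrow> 'a list list \<Rightarrow> bool" where
  "is_OA lam t k V A \<longleftrightarrow>
     is_array (lam * card V ^ t) k V A \<and>
     (\<forall>S. S \<subseteq> {..<k} \<and> card S = t \<longrightarrow>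
        (\<forall>x. length x = t \<and> set x \<subseteq> V \<longrightarrow> occ A (sorted_list_of_set S) x = lam))"

definition is_COA :: "nat \<Rightarrow> nat \<Rightarrow> nat \<Rightarrow> 'a set \<Rightarrow> 'a list list \<Rightarrow> bool" where
  "is_COA lam t k V A \<longleftrightarrow>
     is_array (lam * card V ^ t) k V A \<and>
     (\<forall>i. i + t \<le> k \<longrightarrow>
        (\<forall>x. length x = t \<and> set x \<subseteq> V \<longrightarrow> occ A [i..<i+t] x = lam))"

definition simple_COA :: "nat \<Rightarrow> nat \<Rightarrow> 'a list list \<Rightarrow> bool" where
  "simple_COA t k A \<longleftrightarrow>
     (\<forall>i j. i < j \<and> j + t \<le> k \<longrightarrow>
        distinct (map (\<lambda>r. proj r (sorted_list_of_set ({i..<i+t} \<union> {j..<j+t}))) A))"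

end

theory Submission
  imports Defs
begin

definition cz :: "nat \<Rightarrow> nat \<Rightarrow> nat" where
 "cz k s = (if even s then s div 2 else if s div 2 + 3 = k then 0 else s div 2 + 3)"
definition cc :: "nat \<Rightarrow> nat \<Rightarrow> nat" where
 "cc k m = (if m < k then m else cz k (m - k))"

lemma cc_a: "m < k \<Longrightarrow> cc k m = m" by (simp add: cc_def)
lemma cc_b: "cc k (k + 2*t) = t" by (simp add: cc_def cz_def)
lemma cc_c: "cc k (Suc (k + 2*t)) = (if t + 3 = k then 0 else t + 3)" by (simp add: cc_def cz_def)
lemma pos_cases:
  obtains (a) "m < k" | (b) t where "m = k + 2*t" | (c) t where "m = k + Suc (2*t)"
proof (cases "m < k")
  case True then show ?thesis using a by simp
next
  case False
  then obtain d where d: "m = k + d" by (metis le_add_diff_inverse not_less)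
  show ?thesis
  proof (cases "even d")
    case True then show ?thesis using b d by (metis evenE)
  next
    case False then show ?thesis using c d by (metis oddE add_Suc_right add.commute plus_1_eq_Suc)
  qed
qed
lemma cc_lt: "5 \<le> k \<Longrightarrow> m \<le> 2*k \<Longrightarrow> cc k m < k"
  by (cases m rule: pos_cases[of _ k]) (auto simp: cc_a cc_b cc_c)
lemma cc_ne: assumes "5 \<le> k" "m < 2*k" shows "cc k m \<noteq> cc k (Suc m)"
proof (cases m rule: pos_cases[of _ k])
  case a
  then show ?thesis using assms by (cases "Suc m = k") (auto simp: cc_def cz_def)
next
  case (b t)
  then show ?thesis using cc_b[of k t] cc_c[of k t] assms by simp
next
  case (c t)
  then show ?thesis using cc_b[of k "Suc t"] cc_c[of k t] assms by simp
qed

lemma cc_edge: "5 \<le> k \<Longrightarrow> i < j \<Longrightarrow> j < 2*k \<Longrightarrow>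
  \<not> ((cc k i = cc k j \<and> cc k (Suc i) = cc k (Suc j)) \<or> (cc k i = cc k (Suc j) \<and> cc k (Suc i) = cc k j))"
proof -
  assume h: "5 \<le> k" "i < j" "j < 2*k"
  have e1: "cc k (Suc m) = (if Suc m < k then Suc m else 0)" if "m < k" for m
    using that by (cases "Suc m = k") (auto simp: cc_def cz_def)
  have e2: "cc k (Suc (k + 2*t)) = (if t + 3 = k then 0 else t + 3)" for t
    using cc_c[of k t] by simp
  have e3: "cc k (Suc (Suc (k + 2*t))) = Suc t" for t
    using cc_b[of k "Suc t"] by simp
  show ?thesis
  proof (cases i rule: pos_cases[of _ k])
    case a
    then show ?thesis
      by (cases j rule: pos_cases[of _ k]) (use h in \<open>auto simp: cc_a cc_b cc_c e1 e2 e3 split: if_splits\<close>)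
  next
    case (b t)
    then show ?thesis
      by (cases j rule: pos_cases[of _ k]) (use h in \<open>auto simp: cc_a cc_b cc_c e1 e2 e3 split: if_splits\<close>)
  next
    case (c t)
    then show ?thesis
      by (cases j rule: pos_cases[of _ k]) (use h in \<open>auto simp: cc_a cc_b cc_c e1 e2 e3 split: if_splits\<close>)
  qed
qed

lemma card3: "(a::nat) \<noteq> b \<Longrightarrow> c \<noteq> d \<Longrightarrow> \<not> ((a = c \<and> b = d) \<or> (a = d \<and> b = c)) \<Longrightarrow> 3 \<le> card {a,b,c,d}"
  by (auto simp: card_insert_if)

lemma length_partition:
  assumes "finite K" "\<forall>r\<in>set xs. g r \<in> K"
  shows "length xs = (\<Sum>y\<in>K. length (filter (\<lambda>r. g r = y) xs))"
  using assms(2)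
proof (induction xs)
  case Nil then show ?case by simp
next
  case (Cons a xs)
  have "(\<Sum>y\<in>K. length (filter (\<lambda>r. g r = y) (a#xs)))
      = (\<Sum>y\<in>K. (if g a = y then 1 else 0) + length (filter (\<lambda>r. g r = y) xs))"
    by (intro sum.cong) auto
  also have "\<dots> = (\<Sum>y\<in>K. (if g a = y then 1 else 0)) + (\<Sum>y\<in>K. length (filter (\<lambda>r. g r = y) xs))"
    by (rule sum.distrib)
  also have "(\<Sum>y\<in>K. (if g a = y then 1 else 0::nat)) = 1"
    using Cons.prems assms(1) by (simp add: sum.delta)
  finally show ?case using Cons by simp
qed

lemma length_filter_mono:
  "(\<forall>r\<in>set xs. P r \<longrightarrow> Q r) \<Longrightarrow> length (filter P xs) \<le> length (filter Q xs)"
  by (induction xs) auto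

lemma distinct_from_filter:
  "(\<forall>y. length (filter (\<lambda>r. g r = y) xs) \<le> 1) \<Longrightarrow> distinct (map g xs)"
proof (induction xs)
  case Nil then show ?case by simp
next
  case (Cons a xs)
  have "\<forall>y. length (filter (\<lambda>r. g r = y) xs) \<le> 1"
  proof
    fix y show "length (filter (\<lambda>r. g r = y) xs) \<le> 1"
      using Cons.prems[rule_format, of y] by (auto split: if_splits)
  qed
  moreover have "g a \<notin> g ` set xs"
  proof
    assume "g a \<in> g ` set xs"
    then have "filter (\<lambda>r. g r = g a) xs \<noteq> []" by (auto simp: filter_empty_conv)
    then have "length (filter (\<lambda>r. g r = g a) xs) \<ge> 1" by (cases "filter (\<lambda>r. g r = g a) xs") auto
    then show False using Cons.prems[rule_format, of "g a"] by simp
  qed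
  ultimately show ?case using Cons.IH by simp
qed

lemma triple1:
  assumes OA: "is_OA 1 3 (k+1) V A0" and ab: "a < b" "b < k" and xyl: "x\<in>V" "y\<in>V" "l\<in>V"
  shows "length (filter (\<lambda>r. r!a = x \<and> r!b = y \<and> r!k = l) A0) = 1"
proof -
  have S: "{a,b,k} \<subseteq> {..<k+1}" "card {a,b,k} = 3" using ab by auto
  have sl: "sorted_list_of_set {a,b,k} = [a,b,k]"
    using ab by (subst sorted_list_of_set_unique[symmetric]) auto
  have all: "\<forall>S. S \<subseteq> {..<k+1} \<and> card S = 3 \<longrightarrow> (\<forall>x. length x = 3 \<and> set x \<subseteq> V \<longrightarrow> occ A0 (sorted_list_of_set S) x = 1)"
    using OA unfolding is_OA_def by blast
  have "occ A0 (sorted_list_of_set {a,b,k}) [x,y,l] = 1"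
    apply (rule all[rule_format]) using S xyl by auto
  then show ?thesis unfolding sl occ_def proj_def by simp
qed

lemma pair_count:
  assumes OA: "is_OA 1 3 (k+1) V A0" and fin: "finite V" and L: "L \<subseteq> V"
    and ab: "a \<noteq> b" "a < k" "b < k" and xy: "x\<in>V" "y\<in>V"
  shows "length (filter (\<lambda>r. r!a = x \<and> r!b = y) (filter (\<lambda>r. r!k \<in> L) A0)) = card L"
proof -
  have one: "length (filter (\<lambda>r. r!a = x \<and> r!b = y \<and> r!k = l) A0) = 1" if "l \<in> L" for l
  proof (cases "a < b")
    case True then show ?thesis using triple1[OF OA True ab(3) xy] that L by auto
  next
    case False
    then have "b < a" using ab by simp
    from triple1[OF OA this ab(2) xy(2) xy(1), of l] that L
    have "length (filter (\<lambda>r. r!b = y \<and> r!a = x \<and> r!k = l) A0) = 1" by auto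
    moreover have "filter (\<lambda>r. r!b = y \<and> r!a = x \<and> r!k = l) A0 = filter (\<lambda>r. r!a = x \<and> r!b = y \<and> r!k = l) A0"
      by (rule filter_cong) auto
    ultimately show ?thesis by simp
  qed
  define xs where "xs = filter (\<lambda>r. r!a = x \<and> r!b = y \<and> r!k \<in> L) A0"
  have "filter (\<lambda>r. r!a = x \<and> r!b = y) (filter (\<lambda>r. r!k \<in> L) A0) = xs"
    unfolding xs_def by (simp add: filter_filter conj_commute conj_left_commute)
  moreover have "length xs = (\<Sum>l\<in>L. length (filter (\<lambda>r. r!k = l) xs))"
    by (rule length_partition) (use fin L finite_subset xs_def in auto)
  moreover have "(\<Sum>l\<in>L. length (filter (\<lambda>r. r!k = l) xs)) = (\<Sum>l\<in>L. 1)"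
  proof (rule sum.cong)
    fix l assume l: "l \<in> L"
    have "filter (\<lambda>r. r!k = l) xs = filter (\<lambda>r. r!a = x \<and> r!b = y \<and> r!k = l) A0"
      unfolding xs_def filter_filter by (rule filter_cong) (use l in auto)
    then show "length (filter (\<lambda>r. r!k = l) xs) = 1" using one[OF l] by simp
  qed simp
  ultimately show ?thesis by simp
qed

theorem mainTheorem7:
  fixes k v :: nat and V :: "'a set"
  assumes "k > 4" and "v \<ge> 2" and "finite V" and "card V = v"
    and "\<exists>A. is_OA 1 3 (k + 1) V A"
  shows "\<forall>lam. 0 < lam \<and> lam \<le> v \<longrightarrow>
           (\<exists>A. is_COA lam 2 (2 * k + 1) V A \<and> simple_COA 2 (2 * k + 1) A)"
proof (intro allI impI)
  fix lam assume lam: "0 < lam \<and> lam \<le> v"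
  obtain A0 where OA: "is_OA 1 3 (k + 1) V A0" using assms(5) by blast
  have k5: "5 \<le> k" using assms(1) by simp
  have rows: "\<And>r. r \<in> set A0 \<Longrightarrow> length r = k+1 \<and> set r \<subseteq> V"
    using OA unfolding is_OA_def is_array_def by auto
  have OA3: "\<And>S x. S \<subseteq> {..<k+1} \<Longrightarrow> card S = 3 \<Longrightarrow> length x = 3 \<Longrightarrow> set x \<subseteq> V \<Longrightarrow>
      occ A0 (sorted_list_of_set S) x = 1"
    using OA unfolding is_OA_def by auto
  obtain L where L: "L \<subseteq> V" "card L = lam"
    using obtain_subset_with_card_n[of lam V] lam assms(4) by auto
  define B where "B = filter (\<lambda>r. r!k \<in> L) A0"
  define F where "F = (\<lambda>r::'a list. map (\<lambda>m. r ! cc k m) [0..<2*k+1])"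
  define A where "A = map F B"
  have Bsub: "set B \<subseteq> set A0" unfolding B_def by auto
  have pc: "\<And>a b x y. a \<noteq> b \<Longrightarrow> a < k \<Longrightarrow> b < k \<Longrightarrow> x \<in> V \<Longrightarrow> y \<in> V \<Longrightarrow>
      length (filter (\<lambda>r. r!a = x \<and> r!b = y) B) = lam"
    using pair_count[OF OA assms(3) L(1)] L(2) unfolding B_def by auto
  have Fnth: "\<And>r m. m < 2*k+1 \<Longrightarrow> F r ! m = r ! cc k m" unfolding F_def by (simp add: nth_map del: upt_Suc)
  have lenB: "length B = lam * v^2"
  proof -
    have "length B = (\<Sum>p\<in>V\<times>V. length (filter (\<lambda>r. (r!0, r!1) = p) B))"
    proof (rule length_partition)
      show "finite (V \<times> V)" using assms(3) by simp
      show "\<forall>r\<in>set B. (r ! 0, r ! 1) \<in> V \<times> V"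
      proof
        fix r assume "r \<in> set B"
        then have "length r = k+1" "set r \<subseteq> V" using rows Bsub by auto
        then show "(r ! 0, r ! 1) \<in> V \<times> V" using k5 by (auto intro!: subsetD[OF \<open>set r \<subseteq> V\<close>] nth_mem)
      qed
    qed
    also have "\<dots> = (\<Sum>p\<in>V\<times>V. lam)"
    proof (rule sum.cong)
      fix p assume "p \<in> V \<times> V"
      then obtain x y where p: "p = (x,y)" "x \<in> V" "y \<in> V" by auto
      have "filter (\<lambda>r. (r!0, r!1) = p) B = filter (\<lambda>r. r!0 = x \<and> r!1 = y) B"
        using p by (intro filter_cong) auto
      then show "length (filter (\<lambda>r. (r!0, r!1) = p) B) = lam" using pc[of 0 1 x y] p k5 by simp
    qed simp
    finally show ?thesis using assms(4) by (simp add: card_cartesian_product power2_eq_square)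
  qed
  have arr: "is_array (lam * card V ^ 2) (2 * k + 1) V A"
    unfolding is_array_def
  proof (intro conjI ballI)
    show "length A = lam * card V ^ 2" unfolding A_def using lenB assms(4) by simp
  next
    fix r assume "r \<in> set A"
    then obtain r0 where r0: "r0 \<in> set B" "r = F r0" unfolding A_def by auto
    then have r0': "length r0 = k+1" "set r0 \<subseteq> V" using rows Bsub by auto
    show "length r = 2*k+1" using r0 unfolding F_def by simp
    show "set r \<subseteq> V"
    proof
      fix z assume "z \<in> set r"
      then obtain m where "m < 2*k+1" "z = r0 ! cc k m" using r0 unfolding F_def by (auto simp del: upt_Suc)
      moreover have "cc k m < length r0" using cc_lt[OF k5, of m] \<open>m < 2*k+1\<close> r0' by simp
      ultimately show "z \<in> V" using r0' nth_mem by blast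
    qed
  qed
  have coa: "is_COA lam 2 (2 * k + 1) V A"
    unfolding is_COA_def
  proof (intro conjI allI impI arr)
    fix i x assume i: "i + 2 \<le> 2 * k + 1" and x: "length x = 2 \<and> set x \<subseteq> V"
    then obtain x0 x1 where xx: "x = [x0,x1]" "x0 \<in> V" "x1 \<in> V"
      by (cases x; cases "tl x") auto
    have up: "[i..<i+2] = [i, Suc i]" by (simp add: upt_rec)
    have "occ A [i..<i+2] x = length (filter (\<lambda>r. r ! cc k i = x0 \<and> r ! cc k (Suc i) = x1) B)"
      unfolding occ_def A_def up proj_def xx filter_map length_map o_def
      using i by (intro arg_cong[where f=length] filter_cong) (auto simp: Fnth)
    also have "\<dots> = lam"
      using pc cc_ne[OF k5, of i] cc_lt[OF k5, of i] cc_lt[OF k5, of "Suc i"] i xx by auto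
    finally show "occ A [i..<i+2] x = lam" .
  qed
  have simp: "simple_COA 2 (2 * k + 1) A"
    unfolding simple_COA_def
  proof (intro allI impI)
    fix i j assume ij: "i < j \<and> j + 2 \<le> 2 * k + 1"
    define U where "U = {i..<i+2} \<union> {j..<j+2}"
    have U: "U = {i, Suc i, j, Suc j}" unfolding U_def by auto
    have U2: "\<And>u. u \<in> U \<Longrightarrow> u < 2*k+1" using ij U by auto
    define cols where "cols = sorted_list_of_set U"
    have scols: "set cols = U" unfolding cols_def by (rule set_sorted_list_of_set) (simp add: U)
    define T where "T = cc k ` U"
    have T3: "3 \<le> card T"
      unfolding T_def U using card3[OF cc_ne[OF k5, of i] cc_ne[OF k5, of j] cc_edge[OF k5, of i j]] ij
      by simp
    have Tk: "T \<subseteq> {..<k+1}" unfolding T_def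
    proof
      fix z assume "z \<in> cc k ` U"
      then obtain u where "u \<in> U" "z = cc k u" by blast
      then show "z \<in> {..<k+1}" using U2[of u] cc_lt[OF k5, of u] by simp
    qed
    obtain S where S: "S \<subseteq> T" "card S = 3"
      using obtain_subset_with_card_n[OF T3] by auto
    have Sk: "S \<subseteq> {..<k+1}" using S Tk by auto
    have "distinct (map (\<lambda>r. proj r cols) (map F B))"
      unfolding map_map
    proof (rule distinct_from_filter, intro allI)
      fix y
      show "length (filter (\<lambda>r. ((\<lambda>r. proj r cols) \<circ> F) r = y) B) \<le> 1"
      proof (cases "filter (\<lambda>r. ((\<lambda>r. proj r cols) \<circ> F) r = y) B")
        case Nil then show ?thesis by simp
      next
        case (Cons r0 rest)
        have "r0 \<in> set (filter (\<lambda>r. ((\<lambda>r. proj r cols) \<circ> F) r = y) B)"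
          using Cons by simp
        then have r0: "r0 \<in> set B" "proj (F r0) cols = y" by simp_all
        have r0A: "r0 \<in> set A0" using r0 Bsub by blast
        have fS: "finite S" using S(2) card.infinite by fastforce
        have eqS: "proj r (sorted_list_of_set S) = proj r0 (sorted_list_of_set S)"
          if "r \<in> set B" "proj (F r) cols = y" for r
        proof -
          have "map (\<lambda>c. F r ! c) cols = map (\<lambda>c. F r0 ! c) cols"
            using that(2) r0(2) unfolding proj_def by simp
          then have fe: "\<forall>u\<in>U. F r ! u = F r0 ! u" unfolding map_eq_conv scols .
          have ce: "r ! c = r0 ! c" if c: "c \<in> S" for c
          proof -
            obtain u where u: "u \<in> U" "c = cc k u" using c S(1) unfolding T_def by blast
            have "F r ! u = F r0 ! u" using fe u(1) by blast
            then show ?thesis using Fnth[OF U2[OF u(1)], of r] Fnth[OF U2[OF u(1)], of r0] u(2) by simp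
          qed
          show ?thesis unfolding proj_def
          proof (rule map_ext[rule_format])
            fix c assume "c \<in> set (sorted_list_of_set S)"
            then have "c \<in> S" using fS by simp
            then show "r ! c = r0 ! c" by (rule ce)
          qed
        qed
        have "length (filter (\<lambda>r. ((\<lambda>r. proj r cols) \<circ> F) r = y) B)
            \<le> length (filter (\<lambda>r. proj r (sorted_list_of_set S) = proj r0 (sorted_list_of_set S)) B)"
          by (rule length_filter_mono) (use eqS in auto)
        also have "\<dots> \<le> length (filter (\<lambda>r. proj r (sorted_list_of_set S) = proj r0 (sorted_list_of_set S)) A0)"
          unfolding B_def filter_filter by (rule length_filter_mono) auto
        also have "\<dots> = 1"
        proof -
          have "length (proj r0 (sorted_list_of_set S)) = 3" unfolding proj_def using S(2) by simp
          moreover have "set (proj r0 (sorted_list_of_set S)) \<subseteq> V"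
          proof
            fix z assume "z \<in> set (proj r0 (sorted_list_of_set S))"
            then obtain c where c: "c \<in> set (sorted_list_of_set S)" "z = r0 ! c" unfolding proj_def by auto
            have "c < length r0" using c(1) fS Sk rows[OF r0A] by auto
            then have "r0 ! c \<in> set r0" by (rule nth_mem)
            then show "z \<in> V" using c(2) rows[OF r0A] by blast
          qed
          ultimately show ?thesis using OA3[OF Sk S(2)] unfolding occ_def by simp
        qed
        finally show ?thesis .
      qed
    qed
    then show "distinct (map (\<lambda>r. proj r (sorted_list_of_set ({i..<i+2} \<union> {j..<j+2}))) A)"
      unfolding A_def cols_def U_def .
  qed
  show "\<exists>A. is_COA lam 2 (2 * k + 1) V A \<and> simple_COA 2 (2 * k + 1) A"
    using coa simp by blast
qed

end
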